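(* Let $m\ge 1$, $n\ge 1$ be integers, let $K\in\{\mathbb{R},\mathbb{C}\}$, and let $\mathcal{Z}$ be either $\mathbb{Z}^m$ or $\{t\in\mathbb{Z}^m \mid t\ge t_1\}$ for some $t_1\in\mathbb{Z}^m$. Let $A_\alpha\colon\mathcal{Z}\to\mathcal{M}_n(K)$, $\alpha\in\{1,\dots,m\}$, be matrix functions satisfying the compatibility relations $$A_\alpha(t+1_\beta)A_\beta(t)=A_\beta(t+1_\alpha)A_\alpha(t),\quad \forall t\in\mathcal{Z},\ \forall \alpha,\beta\in\{1,\dots,m\}.$$ Let $T=(T_1,\dots,T_m)\in\mathbb{N}^m$, $T\neq 0$, and suppose that $A_\alpha(t+T_\beta\cdot 1_\beta)=A_\alpha(t)$ for all $\alpha,\beta\in\{1,\dots,m\}$ and all $t\in\mathcal{Z}$. Then: (a) $C_{\alpha,k}(t+T_\beta\cdot 1_\beta)=C_{\alpha,k}(t)$ for all $\alpha,\beta\in\{1,\dots,m\}$, all $k\in\mathbb{N}$ and all $t\in\mathcal{Z}$; (b) $C_{\alpha,T_\alpha}(t)\,C_{\beta,T_\beta}(t)=C_{\beta,T_\beta}(t)\,C_{\alpha,T_\alpha}(t)$ for all $\alpha,\beta\in\{1,\dots,m\}$ and all $t\in\mathcal{Z}$; (c) $\chi(t+T_\alpha\cdot 1_\alpha,s)=\chi(t,s)\,C_{\alpha,T_\alpha}(s)$ for all $\alpha\in\{1,\dots,m\}$ and all $t,s\in\mathcal{Z}$ with $t\ge s$.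
   Context: $\mathbb{N}=\{0,1,2,\dots\}$. For $\alpha\in\{1,\dots,m\}$, $1_\alpha\in\mathbb{Z}^m$ is the vector with $1$ in position $\alpha$ and $0$ elsewhere. On $\mathbb{Z}^m$, $s\le t$ means $s^\alpha\le t^\alpha$ for all $\alpha$. For $\alpha\in\{1,\dots,m\}$, $k\in\mathbb{N}$, $t\in\mathcal{Z}$, define $C_{\alpha,0}(t)=I_n$ and, for $k\ge1$, $C_{\alpha,k}(t)=\prod_{j=1}^{k}A_\alpha(t+(k-j)\cdot 1_\alpha)=A_\alpha(t+(k-1)1_\alpha)\cdots A_\alpha(t+1_\alpha)A_\alpha(t)$. Under the compatibility relations, for each $s\in\mathcal{Z}$ there is a unique function $\chi(\cdot,s)\colon\{t\in\mathcal{Z}\mid t\ge s\}\to\mathcal{M}_n(K)$ with $\chi(s,s)=I_n$ and $\chi(t+1_\alpha,s)=A_\alpha(t)\chi(t,s)$ for all $t\ge s$ and all $\alpha$; $\chi$ is called the transition (fundamental) matrix. *)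

theory Defs
  imports "HOL-Analysis.Analysis"
begin

text \<open>Index set {1..m} is modelled by a finite type 'm; Z^m is int^'m.\<close>

definition unitv :: "'m::finite \<Rightarrow> int^'m" where
  "unitv \<alpha> = (\<chi> i. if i = \<alpha> then 1 else 0)"

definition vle :: "int^'m::finite \<Rightarrow> int^'m \<Rightarrow> bool" where
  "vle s t \<longleftrightarrow> (\<forall>i. s $ i \<le> t $ i)"

definition admissible_domain :: "(int^'m::finite) set \<Rightarrow> bool" where
  "admissible_domain Z \<longleftrightarrow> Z = UNIV \<or> (\<exists>t1. Z = {t. vle t1 t})"

fun Cmat :: "('m::finite \<Rightarrow> int^'m \<Rightarrow> 'a::comm_ring_1^'n^'n) \<Rightarrow> 'm \<Rightarrow> nat \<Rightarrow> int^'m \<Rightarrow> 'a^'n^'n" where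
  "Cmat A \<alpha> 0 t = mat 1"
| "Cmat A \<alpha> (Suc k) t = A \<alpha> (t + of_nat k *s unitv \<alpha>) ** Cmat A \<alpha> k t"

text \<open>X is the transition matrix chi(.,s): chi(s,s)=I and chi(t+1_alpha,s)=A_alpha(t) chi(t,s) for t >= s.\<close>
definition is_transition :: "('m::finite \<Rightarrow> int^'m \<Rightarrow> 'a::comm_ring_1^'n^'n) \<Rightarrow> int^'m \<Rightarrow> (int^'m \<Rightarrow> 'a^'n^'n) \<Rightarrow> bool" where
  "is_transition A s X \<longleftrightarrow> X s = mat 1 \<and> (\<forall>t \<alpha>. vle s t \<longrightarrow> X (t + unitv \<alpha>) = A \<alpha> t ** X t)"

end

theory Submission
  imports Defs
begin

lemma unitv_comp: "unitv a $ i = (if i = a then 1 else 0)"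
  by (simp add: unitv_def)

lemma Z_up: assumes "admissible_domain Z" "t \<in> Z" "vle t u" shows "u \<in> Z"
  using assms unfolding admissible_domain_def vle_def by (auto intro: order_trans)

lemma vle_add: "vle t (t + of_nat k *s unitv a)"
  by (simp add: vle_def unitv_comp)

lemma vle_add1: "vle t (t + unitv a)"
  by (simp add: vle_def unitv_comp)

lemma vle_trans: "vle a b \<Longrightarrow> vle b c \<Longrightarrow> vle a c"
  unfolding vle_def by (meson order_trans)

lemma sucv: "t + of_nat (Suc k) *s (u::int^'m::finite) = t + of_nat k *s u + u"
  by (simp add: vector_sadd_rdistrib algebra_simps)

lemma C_per:
  assumes Z: "admissible_domain Z"
    and per: "\<And>t \<alpha> \<beta>. t \<in> Z \<Longrightarrow> A \<alpha> (t + of_nat (T \<beta>) *s unitv \<beta>) = A \<alpha> t"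
    and t: "t \<in> Z"
  shows "Cmat A \<alpha> k (t + of_nat (T \<beta>) *s unitv \<beta>) = Cmat A \<alpha> k t"
proof (induction k)
  case 0 then show ?case by simp
next
  case (Suc k)
  have tz: "t + of_nat k *s unitv \<alpha> \<in> Z" using Z_up[OF Z t vle_add] .
  have "t + of_nat (T \<beta>) *s unitv \<beta> + of_nat k *s unitv \<alpha>
      = (t + of_nat k *s unitv \<alpha>) + of_nat (T \<beta>) *s unitv \<beta>" by (simp add: algebra_simps)
  have "A \<alpha> (t + of_nat (T \<beta>) *s unitv \<beta> + of_nat k *s unitv \<alpha>) = A \<alpha> (t + of_nat k *s unitv \<alpha>)"
    using per[OF tz, of \<alpha> \<beta>] by (simp add: add_ac)
  then show ?case using Suc.IH by simp
qed

lemma C_lem1: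
  assumes Z: "admissible_domain Z"
    and compat: "\<And>t \<alpha> \<beta>. t \<in> Z \<Longrightarrow>
       A \<alpha> (t + unitv \<beta>) ** A \<beta> t = A \<beta> (t + unitv \<alpha>) ** A \<alpha> t"
    and t: "t \<in> Z"
  shows "Cmat A \<alpha> k (t + unitv \<beta>) ** A \<beta> t = A \<beta> (t + of_nat k *s unitv \<alpha>) ** Cmat A \<alpha> k t"
proof (induction k)
  case 0 then show ?case by (simp add: matrix_mul_lid matrix_mul_rid)
next
  case (Suc k)
  have tz: "t + of_nat k *s unitv \<alpha> \<in> Z" using Z_up[OF Z t vle_add] .
  have e: "t + unitv \<beta> + of_nat k *s unitv \<alpha> = (t + of_nat k *s unitv \<alpha>) + unitv \<beta>"
    by (simp add: algebra_simps)
  have "Cmat A \<alpha> (Suc k) (t + unitv \<beta>) ** A \<beta> t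
      = A \<alpha> ((t + of_nat k *s unitv \<alpha>) + unitv \<beta>) ** (Cmat A \<alpha> k (t + unitv \<beta>) ** A \<beta> t)"
    by (simp add: e matrix_mul_assoc)
  also have "\<dots> = (A \<alpha> ((t + of_nat k *s unitv \<alpha>) + unitv \<beta>) ** A \<beta> (t + of_nat k *s unitv \<alpha>)) ** Cmat A \<alpha> k t"
    using Suc by (simp add: matrix_mul_assoc)
  also have "\<dots> = (A \<beta> ((t + of_nat k *s unitv \<alpha>) + unitv \<alpha>) ** A \<alpha> (t + of_nat k *s unitv \<alpha>)) ** Cmat A \<alpha> k t"
    using compat[OF tz] by (simp add: add_ac)
  also have "\<dots> = A \<beta> (t + of_nat (Suc k) *s unitv \<alpha>) ** Cmat A \<alpha> (Suc k) t"
    by (simp add: sucv matrix_mul_assoc add_ac)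
  finally show ?case .
qed

lemma C_lem2:
  assumes Z: "admissible_domain Z"
    and compat: "\<And>t \<alpha> \<beta>. t \<in> Z \<Longrightarrow>
       A \<alpha> (t + unitv \<beta>) ** A \<beta> t = A \<beta> (t + unitv \<alpha>) ** A \<alpha> t"
    and t: "t \<in> Z"
  shows "Cmat A \<alpha> k (t + of_nat l *s unitv \<beta>) ** Cmat A \<beta> l t
       = Cmat A \<beta> l (t + of_nat k *s unitv \<alpha>) ** Cmat A \<alpha> k t"
proof (induction l)
  case 0 then show ?case by (simp add: matrix_mul_lid matrix_mul_rid)
next
  case (Suc l)
  have tz: "t + of_nat l *s unitv \<beta> \<in> Z" using Z_up[OF Z t vle_add] .
  have e: "t + of_nat l *s unitv \<beta> + of_nat k *s unitv \<alpha> = t + of_nat k *s unitv \<alpha> + of_nat l *s unitv \<beta>"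
    by (simp add: algebra_simps)
  have "Cmat A \<alpha> k (t + of_nat (Suc l) *s unitv \<beta>) ** Cmat A \<beta> (Suc l) t
     = (Cmat A \<alpha> k ((t + of_nat l *s unitv \<beta>) + unitv \<beta>) ** A \<beta> (t + of_nat l *s unitv \<beta>)) ** Cmat A \<beta> l t"
    by (simp add: sucv matrix_mul_assoc add_ac)
  also have "\<dots> = A \<beta> (t + of_nat k *s unitv \<alpha> + of_nat l *s unitv \<beta>) ** (Cmat A \<alpha> k (t + of_nat l *s unitv \<beta>) ** Cmat A \<beta> l t)"
    using C_lem1[OF Z compat tz, of \<alpha> k \<beta>] by (simp add: e matrix_mul_assoc)
  also have "\<dots> = Cmat A \<beta> (Suc l) (t + of_nat k *s unitv \<alpha>) ** Cmat A \<alpha> k t"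
    using Suc by (simp add: matrix_mul_assoc)
  finally show ?case .
qed

lemma trans_C:
  assumes X: "is_transition A s X"
  shows "X (s + of_nat k *s unitv \<alpha>) = Cmat A \<alpha> k s"
proof (induction k)
  case 0 then show ?case using X by (simp add: is_transition_def)
next
  case (Suc k)
  have "X (s + of_nat k *s unitv \<alpha> + unitv \<alpha>) = A \<alpha> (s + of_nat k *s unitv \<alpha>) ** X (s + of_nat k *s unitv \<alpha>)"
    using X vle_add[of s k \<alpha>] by (simp add: is_transition_def)
  then show ?case using Suc by (simp only: sucv Cmat.simps)
qed

lemma uniq:
  assumes F: "\<And>t \<beta>. vle s t \<Longrightarrow> F (t + unitv \<beta>) = (A \<beta> t :: 'a::comm_ring_1^'n^'n) ** F t"
    and G: "\<And>t \<beta>. vle s t \<Longrightarrow> G (t + unitv \<beta>) = A \<beta> t ** G t"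
    and s: "F s = G s"
  shows "vle s (t::int^'m::finite) \<Longrightarrow> F t = G t"
proof (induction "\<Sum>i\<in>UNIV. nat (t $ i - s $ i)" arbitrary: t)
  case 0
  then have "\<forall>i. t $ i = s $ i" unfolding vle_def by (simp add: sum_eq_0_iff) (meson antisym)
  then have "t = s" by (simp add: vec_eq_iff)
  then show ?case using s by simp
next
  case (Suc n)
  then obtain i where i: "t $ i \<noteq> s $ i"
    by (metis (no_types, lifting) diff_self nat_0 nat_zero_as_int sum.neutral old.nat.distinct(1))
  then have gi: "t $ i > s $ i" using Suc.prems unfolding vle_def by (metis antisym not_less)
  define t' where "t' = t - unitv i"
  have tt: "t = t' + unitv i" by (simp add: t'_def)
  have v: "vle s t'" using Suc.prems gi unfolding vle_def t'_def
    by (auto simp: unitv_comp)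
  have "(\<Sum>j\<in>UNIV. nat (t $ j - s $ j)) = (\<Sum>j\<in>UNIV. nat (t' $ j - s $ j)) + 1"
  proof -
    have "(\<Sum>j\<in>UNIV. nat (t $ j - s $ j)) = (\<Sum>j\<in>UNIV. nat (t' $ j - s $ j) + (if j = i then 1 else 0))"
      using gi by (intro sum.cong) (auto simp: t'_def unitv_comp)
    then show ?thesis by (simp add: sum.distrib)
  qed
  then have "n = (\<Sum>j\<in>UNIV. nat (t' $ j - s $ j))" using Suc.hyps by simp
  then have "F t' = G t'" using Suc.hyps v by blast
  then show ?case using F[OF v] G[OF v] tt by simp
qed

theorem proposition2p7:
  fixes Z :: "(int^'m::finite) set"
    and A :: "'m \<Rightarrow> int^'m \<Rightarrow> 'a::real_normed_field^'n::finite^'n"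
    and T :: "'m \<Rightarrow> nat"
  assumes Z: "admissible_domain Z"
    and compat: "\<And>t \<alpha> \<beta>. t \<in> Z \<Longrightarrow>
       A \<alpha> (t + unitv \<beta>) ** A \<beta> t = A \<beta> (t + unitv \<alpha>) ** A \<alpha> t"
    and Tnz: "T \<noteq> (\<lambda>_. 0)"
    and per: "\<And>t \<alpha> \<beta>. t \<in> Z \<Longrightarrow> A \<alpha> (t + of_nat (T \<beta>) *s unitv \<beta>) = A \<alpha> t"
  shows "(\<forall>\<alpha> \<beta> k. \<forall>t\<in>Z. Cmat A \<alpha> k (t + of_nat (T \<beta>) *s unitv \<beta>) = Cmat A \<alpha> k t)
       \<and> (\<forall>\<alpha> \<beta>. \<forall>t\<in>Z. Cmat A \<alpha> (T \<alpha>) t ** Cmat A \<beta> (T \<beta>) t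
                        = Cmat A \<beta> (T \<beta>) t ** Cmat A \<alpha> (T \<alpha>) t)
       \<and> (\<forall>s\<in>Z. \<forall>X. is_transition A s X \<longrightarrow>
            (\<forall>\<alpha>. \<forall>t\<in>Z. vle s t \<longrightarrow> X (t + of_nat (T \<alpha>) *s unitv \<alpha>) = X t ** Cmat A \<alpha> (T \<alpha>) s))"
proof (intro conjI ballI allI impI)
  fix \<alpha> \<beta> k t assume "t \<in> Z"
  then show "Cmat A \<alpha> k (t + of_nat (T \<beta>) *s unitv \<beta>) = Cmat A \<alpha> k t"
    using C_per[where A=A and T=T, OF Z per] by blast
next
  fix \<alpha> \<beta> t assume t: "t \<in> Z"
  show "Cmat A \<alpha> (T \<alpha>) t ** Cmat A \<beta> (T \<beta>) t = Cmat A \<beta> (T \<beta>) t ** Cmat A \<alpha> (T \<alpha>) t"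
    using C_lem2[OF Z compat t, of \<alpha> "T \<alpha>" "T \<beta>" \<beta>] C_per[where A=A and T=T, OF Z per t] by simp
next
  fix s X \<alpha> t assume s: "s \<in> Z" and X: "is_transition A s X" and t: "t \<in> Z" and st: "vle s t"
  let ?F = "\<lambda>t. X (t + of_nat (T \<alpha>) *s unitv \<alpha>)"
  let ?G = "\<lambda>t. X t ** Cmat A \<alpha> (T \<alpha>) s"
  have F: "?F (t + unitv \<beta>) = A \<beta> t ** ?F t" if "vle s t" for t \<beta>
  proof -
    have tz: "t \<in> Z" using Z_up[OF Z s that] .
    have v: "vle s (t + of_nat (T \<alpha>) *s unitv \<alpha>)" using vle_trans[OF that vle_add] .
    have "t + unitv \<beta> + of_nat (T \<alpha>) *s unitv \<alpha> = (t + of_nat (T \<alpha>) *s unitv \<alpha>) + unitv \<beta>"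
      by (simp add: algebra_simps)
    moreover have "X ((t + of_nat (T \<alpha>) *s unitv \<alpha>) + unitv \<beta>) = A \<beta> (t + of_nat (T \<alpha>) *s unitv \<alpha>) ** X (t + of_nat (T \<alpha>) *s unitv \<alpha>)"
      using X v by (simp add: is_transition_def)
    ultimately show ?thesis using per[OF tz, of \<beta> \<alpha>] by (simp add: add_ac)
  qed
  have G: "?G (t + unitv \<beta>) = A \<beta> t ** ?G t" if "vle s t" for t \<beta>
    using X that by (simp add: is_transition_def matrix_mul_assoc)
  have S: "?F s = ?G s" using X trans_C[OF X] by (simp add: is_transition_def matrix_mul_lid)
  show "X (t + of_nat (T \<alpha>) *s unitv \<alpha>) = X t ** Cmat A \<alpha> (T \<alpha>) s"
    using uniq[of s ?F A ?G, OF F G S st] by simp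
qed

end
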